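(* Let $S$ be a ramified inverse semigroup with zero. Let $A=\{a_1,\dots,a_n\}^{\downarrow}$, where $\{a_1,\dots,a_n\}$ is a finite set of pairwise compatible elements of $S$. Then $A=\{b_1,\dots,b_m\}^{\downarrow}$ for some finite set $\{b_1,\dots,b_m\}$ of pairwise orthogonal elements.
   Context: The natural partial order is used; $X^{\downarrow}=\{s\in S : s\le x \text{ for some } x\in X\}$. Elements $s,t$ are compatible if $s^{-1}t$ and $st^{-1}$ are idempotents, orthogonal if $s^{-1}t=0=st^{-1}$. $S$ is ramified if for all $a,b,c\in S$ with $a\ne0$, $a\le b$ and $a\le c$ imply $b\le c$ or $c\le b$. *)

theory Defs
  imports Main
begin

definition inverse_semigroup :: "('a \<Rightarrow> 'a \<Rightarrow> 'a) \<Rightarrow> bool" where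
  "inverse_semigroup m \<longleftrightarrow>
     (\<forall>x y w. m (m x y) w = m x (m y w)) \<and>
     (\<forall>s. \<exists>!t. m (m s t) s = s \<and> m (m t s) t = t)"

definition is_zero :: "('a \<Rightarrow> 'a \<Rightarrow> 'a) \<Rightarrow> 'a \<Rightarrow> bool" where
  "is_zero m z \<longleftrightarrow> (\<forall>s. m z s = z \<and> m s z = z)"

definition isg_inv :: "('a \<Rightarrow> 'a \<Rightarrow> 'a) \<Rightarrow> 'a \<Rightarrow> 'a" where
  "isg_inv m s = (THE t. m (m s t) s = s \<and> m (m t s) t = t)"

definition idem :: "('a \<Rightarrow> 'a \<Rightarrow> 'a) \<Rightarrow> 'a \<Rightarrow> bool" where
  "idem m e \<longleftrightarrow> m e e = e"

definition nat_le :: "('a \<Rightarrow> 'a \<Rightarrow> 'a) \<Rightarrow> 'a \<Rightarrow> 'a \<Rightarrow> bool" where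
  "nat_le m s t \<longleftrightarrow> (\<exists>e. idem m e \<and> s = m e t)"

definition down_closure :: "('a \<Rightarrow> 'a \<Rightarrow> 'a) \<Rightarrow> 'a set \<Rightarrow> 'a set" where
  "down_closure m X = {s. \<exists>x\<in>X. nat_le m s x}"

definition compatible :: "('a \<Rightarrow> 'a \<Rightarrow> 'a) \<Rightarrow> 'a \<Rightarrow> 'a \<Rightarrow> bool" where
  "compatible m s t \<longleftrightarrow> idem m (m (isg_inv m s) t) \<and> idem m (m s (isg_inv m t))"

definition orthogonal :: "('a \<Rightarrow> 'a \<Rightarrow> 'a) \<Rightarrow> 'a \<Rightarrow> 'a \<Rightarrow> 'a \<Rightarrow> bool" where
  "orthogonal m z s t \<longleftrightarrow> m (isg_inv m s) t = z \<and> m s (isg_inv m t) = z"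

definition ramified :: "('a \<Rightarrow> 'a \<Rightarrow> 'a) \<Rightarrow> 'a \<Rightarrow> bool" where
  "ramified m z \<longleftrightarrow> (\<forall>a b c. a \<noteq> z \<longrightarrow> nat_le m a b \<longrightarrow> nat_le m a c \<longrightarrow>
       nat_le m b c \<or> nat_le m c b)"

end

theory Submission
  imports Defs
begin

locale isg =
  fixes m :: "'a \<Rightarrow> 'a \<Rightarrow> 'a" (infixl "\<cdot>" 70)
  assumes ax: "inverse_semigroup m"
begin

abbreviation iv where "iv s \<equiv> isg_inv m s"

lemma assoc: "(x \<cdot> y) \<cdot> w = x \<cdot> (y \<cdot> w)"
  using ax unfolding inverse_semigroup_def by blast

lemma inv_props: "s \<cdot> iv s \<cdot> s = s \<and> iv s \<cdot> s \<cdot> iv s = iv s"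
proof -
  have "\<exists>!t. s \<cdot> t \<cdot> s = s \<and> t \<cdot> s \<cdot> t = t" using ax unfolding inverse_semigroup_def by blast
  thus ?thesis unfolding isg_inv_def by (rule theI')
qed

lemma inv1: "s \<cdot> (iv s \<cdot> s) = s" using inv_props assoc by metis
lemma inv1': "s \<cdot> (iv s \<cdot> (s \<cdot> w)) = s \<cdot> w" by (metis inv1 assoc)
lemma inv2: "iv s \<cdot> (s \<cdot> iv s) = iv s" using inv_props assoc by metis
lemma inv2': "iv s \<cdot> (s \<cdot> (iv s \<cdot> w)) = iv s \<cdot> w" by (metis inv2 assoc)

lemma inv_unique:
  assumes "s \<cdot> t \<cdot> s = s" "t \<cdot> s \<cdot> t = t" shows "t = iv s"
proof -
  have "\<exists>!t. s \<cdot> t \<cdot> s = s \<and> t \<cdot> s \<cdot> t = t" using ax unfolding inverse_semigroup_def by blast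
  thus ?thesis using assms inv_props by blast
qed

lemma inv_inv: "iv (iv s) = s"
  using inv_unique[of "iv s" s] inv_props by metis

lemma idem_inv: "e \<cdot> e = e \<Longrightarrow> iv e = e"
  using inv_unique[of e e] by metis

lemma idem_prod:
  assumes e: "e \<cdot> e = e" and f: "f \<cdot> f = f" shows "(e \<cdot> f) \<cdot> (e \<cdot> f) = e \<cdot> f"
proof -
  define a where "a = e \<cdot> f"
  define b where "b = iv a"
  have aba: "a \<cdot> b \<cdot> a = a" and bab: "b \<cdot> a \<cdot> b = b" using inv_props b_def by auto
  have 1: "a \<cdot> (f \<cdot> b \<cdot> e) \<cdot> a = a"
  proof -
    have "a \<cdot> (f \<cdot> b \<cdot> e) \<cdot> a = e \<cdot> (f \<cdot> f) \<cdot> b \<cdot> (e \<cdot> e) \<cdot> f"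
      by (simp add: a_def assoc)
    also have "\<dots> = a \<cdot> b \<cdot> a" using e f by (simp add: a_def assoc)
    finally show ?thesis using aba by simp
  qed
  have 2: "(f \<cdot> b \<cdot> e) \<cdot> a \<cdot> (f \<cdot> b \<cdot> e) = f \<cdot> b \<cdot> e"
  proof -
    have "(f \<cdot> b \<cdot> e) \<cdot> a \<cdot> (f \<cdot> b \<cdot> e) = f \<cdot> (b \<cdot> (e \<cdot> e) \<cdot> (f \<cdot> f) \<cdot> b) \<cdot> e"
      by (simp add: a_def assoc)
    also have "\<dots> = f \<cdot> (b \<cdot> a \<cdot> b) \<cdot> e" using e f by (simp add: a_def assoc)
    finally show ?thesis using bab by simp
  qed
  have bf: "b = f \<cdot> b \<cdot> e" using inv_unique[OF 1 2] b_def by simp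
  have "b \<cdot> b = b"
  proof -
    have "b \<cdot> b = f \<cdot> (b \<cdot> (e \<cdot> f) \<cdot> b) \<cdot> e" using bf by (metis assoc)
    also have "\<dots> = b" using bab bf by (simp add: a_def)
    finally show ?thesis .
  qed
  hence "iv b = b" by (rule idem_inv)
  hence "a = b" using inv_inv b_def by metis
  thus ?thesis using \<open>b \<cdot> b = b\<close> a_def by simp
qed

lemma idem_comm:
  assumes e: "e \<cdot> e = e" and f: "f \<cdot> f = f" shows "e \<cdot> f = f \<cdot> e"
proof -
  have ef: "(e \<cdot> f) \<cdot> (e \<cdot> f) = e \<cdot> f" using idem_prod e f .
  have fe: "(f \<cdot> e) \<cdot> (f \<cdot> e) = f \<cdot> e" using idem_prod f e .
  have "(e \<cdot> f) \<cdot> (f \<cdot> e) \<cdot> (e \<cdot> f) = e \<cdot> f"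
    using ef e f by (metis assoc)
  moreover have "(f \<cdot> e) \<cdot> (e \<cdot> f) \<cdot> (f \<cdot> e) = f \<cdot> e"
    using fe e f by (metis assoc)
  ultimately have "f \<cdot> e = iv (e \<cdot> f)" by (rule inv_unique)
  thus ?thesis using idem_inv[OF ef] by simp
qed

lemma ss_idem: "(s \<cdot> iv s) \<cdot> (s \<cdot> iv s) = s \<cdot> iv s" by (simp add: assoc inv1')
lemma ss_idem2: "(iv s \<cdot> s) \<cdot> (iv s \<cdot> s) = iv s \<cdot> s" by (simp add: assoc inv2')

lemma inv_mult: "iv (s \<cdot> t) = iv t \<cdot> iv s"
proof -
  have c: "(t \<cdot> iv t) \<cdot> (iv s \<cdot> s) = (iv s \<cdot> s) \<cdot> (t \<cdot> iv t)"
    using idem_comm[OF ss_idem ss_idem2] .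
  have 1: "(s \<cdot> t) \<cdot> (iv t \<cdot> iv s) \<cdot> (s \<cdot> t) = s \<cdot> t"
  proof -
    have "(s \<cdot> t) \<cdot> (iv t \<cdot> iv s) \<cdot> (s \<cdot> t) = s \<cdot> ((t \<cdot> iv t) \<cdot> (iv s \<cdot> s)) \<cdot> t" by (simp add: assoc)
    also have "\<dots> = s \<cdot> ((iv s \<cdot> s) \<cdot> (t \<cdot> iv t)) \<cdot> t" using c by simp
    also have "\<dots> = s \<cdot> t" by (simp add: assoc inv1' inv1)
    finally show ?thesis .
  qed
  have c2: "(iv s \<cdot> s) \<cdot> (t \<cdot> iv t) = (t \<cdot> iv t) \<cdot> (iv s \<cdot> s)" using c by simp
  have 2: "(iv t \<cdot> iv s) \<cdot> (s \<cdot> t) \<cdot> (iv t \<cdot> iv s) = iv t \<cdot> iv s"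
  proof -
    have "(iv t \<cdot> iv s) \<cdot> (s \<cdot> t) \<cdot> (iv t \<cdot> iv s) = iv t \<cdot> ((iv s \<cdot> s) \<cdot> (t \<cdot> iv t)) \<cdot> iv s" by (simp add: assoc)
    also have "\<dots> = iv t \<cdot> ((t \<cdot> iv t) \<cdot> (iv s \<cdot> s)) \<cdot> iv s" using c2 by simp
    also have "\<dots> = iv t \<cdot> iv s" by (simp add: assoc inv2' inv2)
    finally show ?thesis .
  qed
  show ?thesis using inv_unique[OF 1 2] by simp
qed

lemma le_char: "nat_le m s t \<Longrightarrow> s = (s \<cdot> iv s) \<cdot> t"
proof -
  assume "nat_le m s t"
  then obtain e where e: "e \<cdot> e = e" and s: "s = e \<cdot> t" unfolding nat_le_def idem_def by auto
  have ie: "iv e = e" using idem_inv[OF e] .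
  have c: "e \<cdot> (t \<cdot> iv t) = (t \<cdot> iv t) \<cdot> e" using idem_comm[OF e ss_idem] .
  have "(s \<cdot> iv s) \<cdot> t = e \<cdot> t \<cdot> iv t \<cdot> e \<cdot> t" using s ie by (simp add: inv_mult assoc)
  also have "\<dots> = e \<cdot> ((t \<cdot> iv t) \<cdot> e) \<cdot> t" by (simp add: assoc)
  also have "\<dots> = e \<cdot> (e \<cdot> (t \<cdot> iv t)) \<cdot> t" using c by simp
  also have "\<dots> = s" using s e by (metis assoc inv1)
  finally show ?thesis by simp
qed

lemma le_refl: "nat_le m s s"
  unfolding nat_le_def idem_def using ss_idem inv1 assoc by metis

lemma le_trans: "nat_le m s t \<Longrightarrow> nat_le m t u \<Longrightarrow> nat_le m s u"
  unfolding nat_le_def idem_def by (metis idem_prod assoc)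

lemma le_antisym: "nat_le m s t \<Longrightarrow> nat_le m t s \<Longrightarrow> s = t"
proof -
  assume "nat_le m s t" "nat_le m t s"
  then obtain e f where e: "e \<cdot> e = e" and s: "s = e \<cdot> t" and f: "f \<cdot> f = f" and t: "t = f \<cdot> s"
    unfolding nat_le_def idem_def by auto
  have es: "e \<cdot> s = s" using s e by (metis assoc)
  have "t = f \<cdot> (e \<cdot> t)" using t s by simp
  also have "\<dots> = e \<cdot> (f \<cdot> t)" using idem_comm[OF e f] by (metis assoc)
  also have "\<dots> = e \<cdot> t" using t f by (metis assoc)
  finally show ?thesis using s by simp
qed

lemma le_right: "f \<cdot> f = f \<Longrightarrow> nat_le m (s \<cdot> f) s"
proof -
  assume f: "f \<cdot> f = f"
  have c: "f \<cdot> (iv s \<cdot> s) = (iv s \<cdot> s) \<cdot> f" using idem_comm[OF f ss_idem2] .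
  have 1: "s \<cdot> f \<cdot> iv s \<cdot> s = s \<cdot> f"
  proof -
    have "s \<cdot> f \<cdot> iv s \<cdot> s = s \<cdot> (f \<cdot> (iv s \<cdot> s))" by (simp add: assoc)
    also have "\<dots> = s \<cdot> ((iv s \<cdot> s) \<cdot> f)" using c by simp
    also have "\<dots> = s \<cdot> f" by (simp add: assoc inv1')
    finally show ?thesis .
  qed
  have "(s \<cdot> f \<cdot> iv s) \<cdot> (s \<cdot> f \<cdot> iv s) = s \<cdot> f \<cdot> iv s"
  proof -
    have "(s \<cdot> f \<cdot> iv s) \<cdot> (s \<cdot> f \<cdot> iv s) = (s \<cdot> f \<cdot> iv s \<cdot> s) \<cdot> f \<cdot> iv s" by (simp add: assoc)
    also have "\<dots> = s \<cdot> f \<cdot> iv s" using 1 f by (metis assoc)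
    finally show ?thesis .
  qed
  moreover have "s \<cdot> f = (s \<cdot> f \<cdot> iv s) \<cdot> s" using 1 by (simp add: assoc)
  ultimately show ?thesis unfolding nat_le_def idem_def by blast
qed


lemma zero_inv: "is_zero m z \<Longrightarrow> iv z = z"
  unfolding is_zero_def by (metis idem_inv)

lemma compat_cases:
  assumes z: "is_zero m z" and r: "ramified m z" and c: "compatible m a b"
  shows "nat_le m a b \<or> nat_le m b a \<or> orthogonal m z a b"
proof (cases "a \<cdot> (iv b \<cdot> b) = z")
  case True
  have ab: "a \<cdot> iv b = z"
  proof -
    have "a \<cdot> iv b = a \<cdot> (iv b \<cdot> b) \<cdot> iv b" by (simp add: assoc inv2)
    thus ?thesis using True z unfolding is_zero_def by simp
  qed
  have ba: "b \<cdot> iv a = z" using inv_mult[of a "iv b"] ab zero_inv[OF z] inv_inv by simp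
  have "iv a \<cdot> b = iv a \<cdot> b \<cdot> (iv a \<cdot> b)" using c unfolding compatible_def idem_def by simp
  also have "\<dots> = iv a \<cdot> (b \<cdot> iv a) \<cdot> b" by (simp add: assoc)
  also have "\<dots> = z" using ba z unfolding is_zero_def by simp
  finally show ?thesis using ab unfolding orthogonal_def by simp
next
  case False
  have 1: "nat_le m (a \<cdot> (iv b \<cdot> b)) a" by (rule le_right[OF ss_idem2])
  have 2: "nat_le m (a \<cdot> (iv b \<cdot> b)) b"
    using c unfolding compatible_def nat_le_def by (metis assoc)
  show ?thesis using r False 1 2 unfolding ramified_def by blast
qed

lemma exists_max:
  assumes X: "finite X"
  shows "x \<in> X \<Longrightarrow> \<exists>y\<in>X. nat_le m x y \<and> (\<forall>u\<in>X. nat_le m y u \<longrightarrow> u = y)"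
proof (induction "card {u\<in>X. nat_le m x u \<and> u \<noteq> x}" arbitrary: x rule: less_induct)
  case less
  show ?case
  proof (cases "\<forall>u\<in>X. nat_le m x u \<longrightarrow> u = x")
    case True thus ?thesis using less.prems le_refl by blast
  next
    case False
    then obtain u where u: "u \<in> X" "nat_le m x u" "u \<noteq> x" by blast
    have sub: "{v\<in>X. nat_le m u v \<and> v \<noteq> u} \<subset> {v\<in>X. nat_le m x v \<and> v \<noteq> x}"
    proof -
      have "{v\<in>X. nat_le m u v \<and> v \<noteq> u} \<subseteq> {v\<in>X. nat_le m x v \<and> v \<noteq> x}"
        using u le_trans le_antisym by blast
      moreover have "u \<notin> {v\<in>X. nat_le m u v \<and> v \<noteq> u}" by simp
      ultimately show ?thesis using u by blast
    qed
    have "card {v\<in>X. nat_le m u v \<and> v \<noteq> u} < card {v\<in>X. nat_le m x v \<and> v \<noteq> x}"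
      using psubset_card_mono[OF _ sub] X by simp
    from less.hyps[OF this u(1)] obtain y where "y\<in>X" "nat_le m u y" "\<forall>w\<in>X. nat_le m y w \<longrightarrow> w = y"
      by blast
    thus ?thesis using u le_trans by blast
  qed
qed

end

theorem lemma3p8:
  fixes m :: "'a \<Rightarrow> 'a \<Rightarrow> 'a" and z :: 'a and X :: "'a set"
  assumes "inverse_semigroup m"
    and "is_zero m z"
    and "ramified m z"
    and "finite X"
    and "pairwise (compatible m) X"
  shows "\<exists>Y. finite Y \<and> pairwise (orthogonal m z) Y \<and> down_closure m X = down_closure m Y"
proof -
  interpret isg m by unfold_locales (rule assms(1))
  define Y where "Y = {a\<in>X. \<forall>u\<in>X. nat_le m a u \<longrightarrow> u = a}"
  have fY: "finite Y" using assms(4) Y_def by simp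
  have pY: "pairwise (orthogonal m z) Y"
    unfolding pairwise_def
  proof (intro ballI impI)
    fix a b assume a: "a \<in> Y" and b: "b \<in> Y" and ne: "a \<noteq> b"
    have "compatible m a b" using assms(5) a b ne Y_def unfolding pairwise_def by blast
    from compat_cases[OF assms(2,3) this] show "orthogonal m z a b"
      using a b ne Y_def by blast
  qed
  have "down_closure m X = down_closure m Y"
  proof
    show "down_closure m Y \<subseteq> down_closure m X" unfolding down_closure_def Y_def by blast
    show "down_closure m X \<subseteq> down_closure m Y"
    proof
      fix s assume "s \<in> down_closure m X"
      then obtain x where x: "x \<in> X" "nat_le m s x" unfolding down_closure_def by blast
      from exists_max[OF assms(4) x(1)] obtain y where "y \<in> X" "nat_le m x y"
        "\<forall>u\<in>X. nat_le m y u \<longrightarrow> u = y" by blast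
      hence "y \<in> Y" "nat_le m s y" using Y_def x le_trans by blast+
      thus "s \<in> down_closure m Y" unfolding down_closure_def by blast
    qed
  qed
  thus ?thesis using fY pY by blast
qed

end
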